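(* Let $G$ be a residually finite group acting (on the right) primitively on an infinite set $X$, $(x,g)\mapsto x\cdot g$. Let $M=\{1\}\cup G\cup X\cup\{0\}$ be the monoid with identity $1$ and zero $0$, with multiplication extending that of $G$ and given by $xg=x\cdot g$, $gx=0$, $xy=0$ for $g\in G$, $x,y\in X$. Then $I=X\cup\{0\}$ is an ideal of $M$ which is residually finite (as a semigroup), the Rees quotient $M/I$ is residually finite, but $M$ is not residually finite.
   Context: For an ideal $I$ of a monoid $M$, the Rees quotient $M/I$ is the quotient by the congruence $\Delta_M\cup(I\times I)$, where $\Delta_M=\{(x,x):x\in M\}$. A semigroup/monoid is residually finite if distinct elements are separated by homomorphisms to finite semigroups/monoids. A group action on $X$ is primitive if it is transitive and the only $G$-invariant partitions of $X$ are the trivial ones. *)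

theory Defs
  imports "HOL-Algebra.Group" "HOL-Library.Disjoint_Sets"
begin

definition semigroup_str :: "('a, 'b) monoid_scheme \<Rightarrow> bool" where
  "semigroup_str S \<longleftrightarrow>
     (\<forall>x\<in>carrier S. \<forall>y\<in>carrier S. x \<otimes>\<^bsub>S\<^esub> y \<in> carrier S) \<and>
     (\<forall>x\<in>carrier S. \<forall>y\<in>carrier S. \<forall>z\<in>carrier S.
        (x \<otimes>\<^bsub>S\<^esub> y) \<otimes>\<^bsub>S\<^esub> z = x \<otimes>\<^bsub>S\<^esub> (y \<otimes>\<^bsub>S\<^esub> z))"

(* Residual finiteness.  Every finite semigroup/monoid/group is isomorphic to one
   whose carrier is a set of naturals, so finite targets are taken with carrier in nat. *)
definition residually_finite_semigroup :: "('a, 'b) monoid_scheme \<Rightarrow> bool" where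
  "residually_finite_semigroup S \<longleftrightarrow>
     (\<forall>x\<in>carrier S. \<forall>y\<in>carrier S. x \<noteq> y \<longrightarrow>
        (\<exists>(N :: nat monoid) h. semigroup_str N \<and> finite (carrier N) \<and>
            h \<in> hom S N \<and> h x \<noteq> h y))"

definition residually_finite_monoid :: "('a, 'b) monoid_scheme \<Rightarrow> bool" where
  "residually_finite_monoid S \<longleftrightarrow>
     (\<forall>x\<in>carrier S. \<forall>y\<in>carrier S. x \<noteq> y \<longrightarrow>
        (\<exists>(N :: nat monoid) h. monoid N \<and> finite (carrier N) \<and>
            h \<in> hom S N \<and> h \<one>\<^bsub>S\<^esub> = \<one>\<^bsub>N\<^esub> \<and> h x \<noteq> h y))"

definition residually_finite_group :: "('a, 'b) monoid_scheme \<Rightarrow> bool" where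
  "residually_finite_group G \<longleftrightarrow>
     (\<forall>x\<in>carrier G. \<forall>y\<in>carrier G. x \<noteq> y \<longrightarrow>
        (\<exists>(N :: nat monoid) h. group N \<and> finite (carrier N) \<and>
            h \<in> hom G N \<and> h x \<noteq> h y))"

definition right_action :: "('g, 'b) monoid_scheme \<Rightarrow> 'x set \<Rightarrow> ('x \<Rightarrow> 'g \<Rightarrow> 'x) \<Rightarrow> bool" where
  "right_action G X act \<longleftrightarrow>
     (\<forall>x\<in>X. \<forall>g\<in>carrier G. act x g \<in> X) \<and>
     (\<forall>x\<in>X. act x \<one>\<^bsub>G\<^esub> = x) \<and>
     (\<forall>x\<in>X. \<forall>g\<in>carrier G. \<forall>h\<in>carrier G. act (act x g) h = act x (g \<otimes>\<^bsub>G\<^esub> h))"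

definition transitive_action :: "('g, 'b) monoid_scheme \<Rightarrow> 'x set \<Rightarrow> ('x \<Rightarrow> 'g \<Rightarrow> 'x) \<Rightarrow> bool" where
  "transitive_action G X act \<longleftrightarrow> X \<noteq> {} \<and> (\<forall>x\<in>X. \<forall>y\<in>X. \<exists>g\<in>carrier G. act x g = y)"

definition invariant_partition :: "('g, 'b) monoid_scheme \<Rightarrow> 'x set \<Rightarrow> ('x \<Rightarrow> 'g \<Rightarrow> 'x) \<Rightarrow> 'x set set \<Rightarrow> bool" where
  "invariant_partition G X act P \<longleftrightarrow>
     partition_on X P \<and> (\<forall>B\<in>P. \<forall>g\<in>carrier G. (\<lambda>x. act x g) ` B \<in> P)"

definition primitive_action :: "('g, 'b) monoid_scheme \<Rightarrow> 'x set \<Rightarrow> ('x \<Rightarrow> 'g \<Rightarrow> 'x) \<Rightarrow> bool" where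
  "primitive_action G X act \<longleftrightarrow>
     right_action G X act \<and> transitive_action G X act \<and>
     (\<forall>P. invariant_partition G X act P \<longrightarrow> P = {X} \<or> P = (\<lambda>x. {x}) ` X)"

definition monoid_ideal :: "('a, 'b) monoid_scheme \<Rightarrow> 'a set \<Rightarrow> bool" where
  "monoid_ideal M I \<longleftrightarrow> I \<noteq> {} \<and> I \<subseteq> carrier M \<and>
     (\<forall>m\<in>carrier M. \<forall>i\<in>I. m \<otimes>\<^bsub>M\<^esub> i \<in> I \<and> i \<otimes>\<^bsub>M\<^esub> m \<in> I)"

definition sub_semigroup :: "('a, 'b) monoid_scheme \<Rightarrow> 'a set \<Rightarrow> 'a monoid" where
  "sub_semigroup M I = \<lparr>carrier = I, mult = mult M, one = one M\<rparr>"

definition rees_cong :: "('a, 'b) monoid_scheme \<Rightarrow> 'a set \<Rightarrow> ('a \<times> 'a) set" where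
  "rees_cong M I = Id_on (carrier M) \<union> (I \<times> I)"

definition rees_quotient :: "('a, 'b) monoid_scheme \<Rightarrow> 'a set \<Rightarrow> 'a set monoid" where
  "rees_quotient M I =
     \<lparr>carrier = carrier M // rees_cong M I,
      mult = (\<lambda>A B. rees_cong M I `` {(SOME a. a \<in> A) \<otimes>\<^bsub>M\<^esub> (SOME b. b \<in> B)}),
      one = rees_cong M I `` {\<one>\<^bsub>M\<^esub>}\<rparr>"

datatype ('g, 'x) melt = One | Gel 'g | Xel 'x | Zero

fun melt_mult :: "('g, 'b) monoid_scheme \<Rightarrow> ('x \<Rightarrow> 'g \<Rightarrow> 'x) \<Rightarrow>
    ('g, 'x) melt \<Rightarrow> ('g, 'x) melt \<Rightarrow> ('g, 'x) melt" where
  "melt_mult G act One b = b"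
| "melt_mult G act a One = a"
| "melt_mult G act (Gel g) (Gel h) = Gel (g \<otimes>\<^bsub>G\<^esub> h)"
| "melt_mult G act (Xel x) (Gel g) = Xel (act x g)"
| "melt_mult G act (Gel g) (Xel x) = Zero"
| "melt_mult G act (Xel x) (Xel y) = Zero"
| "melt_mult G act Zero b = Zero"
| "melt_mult G act a Zero = Zero"

definition Mon :: "('g, 'b) monoid_scheme \<Rightarrow> 'x set \<Rightarrow> ('x \<Rightarrow> 'g \<Rightarrow> 'x) \<Rightarrow> ('g, 'x) melt monoid" where
  "Mon G X act =
     \<lparr>carrier = {One} \<union> Gel ` carrier G \<union> Xel ` X \<union> {Zero},
      mult = melt_mult G act, one = One\<rparr>"

end

theory Submission
  imports Defs
begin

lemma carrier_Mon: "carrier (Mon G X act) = {One} \<union> Gel ` carrier G \<union> Xel ` X \<union> {Zero}"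
  by (simp add: Mon_def)
lemma mult_Mon: "mult (Mon G X act) = melt_mult G act"
  by (simp add: Mon_def)
lemma one_Mon: "one (Mon G X act) = One"
  by (simp add: Mon_def)

lemma Mon_monoid:
  assumes G: "group G" and A: "right_action G X act"
  shows "monoid (Mon G X act)"
proof (rule monoidI, goal_cases)
  case (1 x y)
  then show ?case using A group.subgroup_self[OF G]
    by (auto simp: carrier_Mon mult_Mon right_action_def Mon_def dest: monoid.m_closed[OF group.is_monoid[OF G]])
next
  case 2 then show ?case by (simp add: Mon_def)
next
  case (3 x y z)
  then show ?case using A
    by (auto simp: carrier_Mon mult_Mon right_action_def monoid.m_assoc[OF group.is_monoid[OF G]])
next
  case (4 x) then show ?case by (simp add: Mon_def)
next
  case (5 x) then show ?case by (cases x) (simp_all add: Mon_def)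
qed

lemma Mon_ideal:
  assumes A: "right_action G X act"
  shows "monoid_ideal (Mon G X act) (Xel ` X \<union> {Zero})"
  using A unfolding monoid_ideal_def
  by (auto simp: carrier_Mon mult_Mon right_action_def)

lemma null_mult:
  "a \<in> Xel ` X \<union> {Zero} \<Longrightarrow> b \<in> Xel ` X \<union> {Zero} \<Longrightarrow> melt_mult G act a b = Zero"
  by auto

lemma Mon_I_rf:
  "residually_finite_semigroup (sub_semigroup (Mon G X act) (Xel ` X \<union> {Zero}))"
  unfolding residually_finite_semigroup_def
proof (intro ballI impI)
  fix a b assume a: "a \<in> carrier (sub_semigroup (Mon G X act) (Xel ` X \<union> {Zero}))"
    and b: "b \<in> carrier (sub_semigroup (Mon G X act) (Xel ` X \<union> {Zero}))" and ab: "a \<noteq> b"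
  obtain c where c: "c \<in> {a,b}" "c \<noteq> Zero" using ab by auto
  define N where "N = \<lparr>carrier = {0,1::nat}, mult = (\<lambda>_ _. 0::nat), one = 0\<rparr>"
  define h where "h = (\<lambda>z. if z = c then 1 else (0::nat))"
  have "semigroup_str N" by (simp add: N_def semigroup_str_def)
  moreover have "finite (carrier N)" by (simp add: N_def)
  moreover have "h \<in> hom (sub_semigroup (Mon G X act) (Xel ` X \<union> {Zero})) N"
    unfolding hom_def using c(2)
    by (auto simp: N_def h_def sub_semigroup_def Mon_def null_mult)
  moreover have "h a \<noteq> h b" using c ab by (auto simp: h_def)
  ultimately show "\<exists>(N :: nat monoid) h. semigroup_str N \<and> finite (carrier N) \<and>
            h \<in> hom (sub_semigroup (Mon G X act) (Xel ` X \<union> {Zero})) N \<and> h a \<noteq> h b" by blast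
qed


lemma Mon_not_rf:
  assumes G: "group G" and P: "primitive_action G X act" and inf: "infinite X"
  shows "\<not> residually_finite_monoid (Mon G X act)"
proof
  assume rf: "residually_finite_monoid (Mon G X act)"
  have A: "right_action G X act" using P by (simp add: primitive_action_def)
  obtain x where x: "x \<in> X" using inf infinite_imp_nonempty by blast
  obtain y where y: "y \<in> X - {x}" using inf infinite_imp_nonempty[of "X - {x}"] by auto
  have xc: "Xel x \<in> carrier (Mon G X act)" "Xel y \<in> carrier (Mon G X act)"
    using x y by (auto simp: carrier_Mon)
  have ne: "Xel x \<noteq> Xel y" using y by auto
  from rf[unfolded residually_finite_monoid_def, rule_format, OF xc ne]
  obtain N :: "nat monoid" and h where H: "monoid N \<and> finite (carrier N) \<and>
            h \<in> hom (Mon G X act) N \<and> h \<one>\<^bsub>Mon G X act\<^esub> = \<one>\<^bsub>N\<^esub> \<and> h (Xel x) \<noteq> h (Xel y)"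
    by blast
  have fN: "finite (carrier N)" and h: "h \<in> hom (Mon G X act) N" and hxy: "h (Xel x) \<noteq> h (Xel y)"
    using H by auto
  define k where "k = (\<lambda>z. h (Xel z))"
  have hm: "\<And>a b. a \<in> carrier (Mon G X act) \<Longrightarrow> b \<in> carrier (Mon G X act) \<Longrightarrow>
      h (melt_mult G act a b) = h a \<otimes>\<^bsub>N\<^esub> h b"
    using h unfolding hom_def mult_Mon by blast
  have kact: "\<And>z g. z \<in> X \<Longrightarrow> g \<in> carrier G \<Longrightarrow> k (act z g) = k z \<otimes>\<^bsub>N\<^esub> h (Gel g)"
  proof -
    fix z g assume "z \<in> X" "g \<in> carrier G"
    then have "h (melt_mult G act (Xel z) (Gel g)) = h (Xel z) \<otimes>\<^bsub>N\<^esub> h (Gel g)"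
      by (intro hm) (auto simp: carrier_Mon)
    then show "k (act z g) = k z \<otimes>\<^bsub>N\<^esub> h (Gel g)" by (simp add: k_def)
  qed
  define r where "r = {(u,v). u \<in> X \<and> v \<in> X \<and> k u = k v}"
  have eq: "equiv X r" unfolding r_def by (auto intro!: equivI refl_onI symI transI)
  have cls: "\<And>u. r `` {u} = {v\<in>X. k v = k u \<and> u \<in> X}" unfolding r_def by auto
  have inv: "invariant_partition G X act (X // r)"
    unfolding invariant_partition_def
  proof (intro conjI ballI)
    show "partition_on X (X // r)" by (rule partition_on_quotient[OF eq])
  next
    fix B g assume B: "B \<in> X // r" and g: "g \<in> carrier G"
    then obtain u where u: "u \<in> X" "B = r `` {u}" by (auto simp: quotient_def)
    have gi: "inv\<^bsub>G\<^esub> g \<in> carrier G" using G g by simp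
    have aug: "act u g \<in> X" using A u g by (simp add: right_action_def)
    have "(\<lambda>z. act z g) ` B = r `` {act u g}"
    proof
      show "(\<lambda>z. act z g) ` B \<subseteq> r `` {act u g}"
      proof
        fix w assume "w \<in> (\<lambda>z. act z g) ` B"
        then obtain z where z: "z \<in> X" "k z = k u" "w = act z g" using u cls by auto
        have "act z g \<in> X" using A g z(1) by (simp add: right_action_def)
        moreover have "k (act z g) = k (act u g)" using kact[OF z(1) g] kact[OF u(1) g] z(2) by simp
        ultimately show "w \<in> r `` {act u g}" using z(3) aug by (simp add: cls)
      qed
    next
      show "r `` {act u g} \<subseteq> (\<lambda>z. act z g) ` B"
      proof
        fix w assume "w \<in> r `` {act u g}"
        then have w: "w \<in> X" "k w = k (act u g)" by (auto simp: cls)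
        define z where "z = act w (inv\<^bsub>G\<^esub> g)"
        have zX: "z \<in> X" using A w gi by (simp add: z_def right_action_def)
        have "act z g = act w (inv\<^bsub>G\<^esub> g \<otimes>\<^bsub>G\<^esub> g)" using A w gi g by (simp add: z_def right_action_def)
        also have "\<dots> = w" using A w G g by (simp add: right_action_def group.l_inv)
        finally have zw: "act z g = w" .
        have "act (act u g) (inv\<^bsub>G\<^esub> g) = u" using A u G g gi
          by (simp add: right_action_def group.r_inv)
        then have "k z = k u" using kact[OF w(1) gi] kact[OF aug gi] w(2) by (simp add: z_def)
        then show "w \<in> (\<lambda>z. act z g) ` B" using zX zw u by (auto simp: cls)
      qed
    qed
    then show "(\<lambda>x. act x g) ` B \<in> X // r" using quotientI[OF aug] by simp
  qed
  then have "X // r = {X} \<or> X // r = (\<lambda>x. {x}) ` X" using P by (simp add: primitive_action_def)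
  then show False
  proof
    assume "X // r = {X}"
    then have "r `` {x} = X" using x by (auto simp: quotient_def)
    then have "k y = k x" using y by (auto simp: cls)
    then show False using hxy by (simp add: k_def)
  next
    assume a: "X // r = (\<lambda>x. {x}) ` X"
    have "inj_on k X"
    proof (rule inj_onI)
      fix u v assume uv: "u \<in> X" "v \<in> X" "k u = k v"
      then have "r `` {u} \<in> (\<lambda>x. {x}) ` X" using a by (auto simp: quotient_def)
      then obtain z where z: "r `` {u} = {z}" by auto
      have m1: "u \<in> r `` {u}" and m2: "v \<in> r `` {u}" using uv by (auto simp: cls)
      have "u \<in> {z}" using m1 unfolding z .
      moreover have "v \<in> {z}" using m2 unfolding z .
      ultimately have "u = z" "v = z" by auto
      then show "u = v" by simp
    qed
    moreover have "k ` X \<subseteq> carrier N" using h by (auto simp: hom_def k_def carrier_Mon)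
    ultimately have "finite X" using fN by (rule inj_on_finite)
    then show False using inf by simp
  qed
qed


definition adj :: "nat monoid \<Rightarrow> nat monoid" where
  "adj N = \<lparr>carrier = {0,1} \<union> (\<lambda>n. n+2) ` carrier N,
     mult = (\<lambda>a b. if a = 1 then b else if b = 1 then a else if a = 0 \<or> b = 0 then 0
                    else ((a-2) \<otimes>\<^bsub>N\<^esub> (b-2)) + 2), one = 1\<rparr>"

lemma adj_monoid:
  assumes N: "group N"
  shows "monoid (adj N)"
proof (rule monoidI, goal_cases)
  case (1 x y) then show ?case using group.is_monoid[OF N]
    by (auto simp: adj_def monoid.m_closed)
next
  case 2 then show ?case by (simp add: adj_def)
next
  case (3 x y z) then show ?case using group.is_monoid[OF N]
    by (auto simp: adj_def monoid.m_assoc monoid.m_closed)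
next
  case (4 x) then show ?case by (simp add: adj_def)
next
  case (5 x) then show ?case by (auto simp: adj_def)
qed

lemma adj_finite: "finite (carrier N) \<Longrightarrow> finite (carrier (adj N))"
  by (simp add: adj_def)

definition fm :: "('g \<Rightarrow> nat) \<Rightarrow> ('g, 'x) melt \<Rightarrow> nat" where
  "fm \<phi> a = (case a of One \<Rightarrow> 1 | Gel g \<Rightarrow> \<phi> g + 2 | Xel _ \<Rightarrow> 0 | Zero \<Rightarrow> 0)"

lemma fm_simps[simp]: "fm \<phi> One = 1" "fm \<phi> (Gel g) = \<phi> g + 2" "fm \<phi> (Xel x) = 0" "fm \<phi> Zero = 0"
  by (simp_all add: fm_def)

lemma fm_hom:
  assumes G: "group G" and N: "group N" and phi: "\<phi> \<in> hom G N" and A: "right_action G X act"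
  shows "fm \<phi> \<in> hom (Mon G X act) (adj N)"
  unfolding hom_def
proof (intro CollectI conjI ballI funcsetI)
  fix a assume "a \<in> carrier (Mon G X act)"
  then show "fm \<phi> a \<in> carrier (adj N)" using phi by (auto simp: carrier_Mon adj_def hom_def)
next
  fix a b assume a: "a \<in> carrier (Mon G X act)" and b: "b \<in> carrier (Mon G X act)"
  have "\<And>g h. g \<in> carrier G \<Longrightarrow> h \<in> carrier G \<Longrightarrow> \<phi> (g \<otimes>\<^bsub>G\<^esub> h) = \<phi> g \<otimes>\<^bsub>N\<^esub> \<phi> h"
    using phi by (simp add: hom_def)
  then show "fm \<phi> (a \<otimes>\<^bsub>Mon G X act\<^esub> b) = fm \<phi> a \<otimes>\<^bsub>adj N\<^esub> fm \<phi> b"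
    using a b by (auto simp: carrier_Mon mult_Mon adj_def)
qed

lemma triv_group: "group \<lparr>carrier = {0::nat}, mult = (\<lambda>_ _. 0), one = 0\<rparr>"
  by (rule groupI) auto

lemma triv_hom: "(\<lambda>_. 0::nat) \<in> hom G \<lparr>carrier = {0::nat}, mult = (\<lambda>_ _. 0), one = 0\<rparr>"
  by (simp add: hom_def)

lemma rees_cls:
  assumes "a \<in> carrier (Mon G X act)"
  shows "rees_cong (Mon G X act) (Xel ` X \<union> {Zero}) `` {a} =
     (if a \<in> Xel ` X \<union> {Zero} then Xel ` X \<union> {Zero} else {a})"
  using assms by (auto simp: rees_cong_def carrier_Mon)

lemma rees_some:
  assumes a: "a \<in> carrier (Mon G X act)"
  shows "(SOME b. b \<in> rees_cong (Mon G X act) (Xel ` X \<union> {Zero}) `` {a}) \<in> carrier (Mon G X act)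
    \<and> fm \<phi> (SOME b. b \<in> rees_cong (Mon G X act) (Xel ` X \<union> {Zero}) `` {a}) = fm \<phi> a"
proof -
  let ?C = "rees_cong (Mon G X act) (Xel ` X \<union> {Zero}) `` {a}"
  have "a \<in> ?C" using a by (auto simp: rees_cong_def)
  then have s: "(SOME b. b \<in> ?C) \<in> ?C" by (rule someI)
  have C: "?C = (if a \<in> Xel ` X \<union> {Zero} then Xel ` X \<union> {Zero} else {a})" by (rule rees_cls[OF a])
  define t where "t = (SOME b. b \<in> ?C)"
  have tC: "t \<in> ?C" using s by (simp add: t_def)
  have "t \<in> carrier (Mon G X act) \<and> fm \<phi> t = fm \<phi> a"
  proof (cases "a \<in> Xel ` X \<union> {Zero}")
    case True
    then have C': "?C = Xel ` X \<union> {Zero}" using C by simp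
    have "t \<in> Xel ` X \<union> {Zero}" using tC by (simp only: C')
    then show ?thesis using True by (auto simp: carrier_Mon)
  next
    case False
    then have C': "?C = {a}" using C by simp
    have "t = a" using tC by (simp only: C' singleton_iff)
    then show ?thesis using a by simp
  qed
  then show ?thesis by (simp add: t_def)
qed


lemma rees_hom:
  assumes G: "group G" and N: "group N" and phi: "\<phi> \<in> hom G N" and A: "right_action G X act"
  shows "(\<lambda>C. fm \<phi> (SOME a. a \<in> C)) \<in> hom (rees_quotient (Mon G X act) (Xel ` X \<union> {Zero})) (adj N)"
  unfolding hom_def
proof (intro CollectI conjI ballI funcsetI)
  let ?M = "Mon G X act" and ?I = "Xel ` X \<union> {Zero}"
  have fh: "fm \<phi> \<in> hom ?M (adj N)" by (rule fm_hom[OF G N phi A])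
  fix C assume "C \<in> carrier (rees_quotient ?M ?I)"
  then obtain a where a: "a \<in> carrier ?M" "C = rees_cong ?M ?I `` {a}"
    by (auto simp: rees_quotient_def quotient_def)
  then have "fm \<phi> (SOME b. b \<in> C) = fm \<phi> a" using rees_some[OF a(1)] by simp
  then show "fm \<phi> (SOME b. b \<in> C) \<in> carrier (adj N)" using fh a(1) by (auto simp: hom_def)
next
  let ?M = "Mon G X act" and ?I = "Xel ` X \<union> {Zero}"
  have fh: "fm \<phi> \<in> hom ?M (adj N)" by (rule fm_hom[OF G N phi A])
  have mc: "monoid ?M" by (rule Mon_monoid[OF G A])
  fix C D assume "C \<in> carrier (rees_quotient ?M ?I)" "D \<in> carrier (rees_quotient ?M ?I)"
  then obtain a b where a: "a \<in> carrier ?M" "C = rees_cong ?M ?I `` {a}"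
    and b: "b \<in> carrier ?M" "D = rees_cong ?M ?I `` {b}"
    by (auto simp: rees_quotient_def quotient_def)
  define sa where "sa = (SOME x. x \<in> C)"
  define sb where "sb = (SOME x. x \<in> D)"
  have sa: "sa \<in> carrier ?M" "fm \<phi> sa = fm \<phi> a" using rees_some[OF a(1)] a(2) sa_def by auto
  have sb: "sb \<in> carrier ?M" "fm \<phi> sb = fm \<phi> b" using rees_some[OF b(1)] b(2) sb_def by auto
  have p: "sa \<otimes>\<^bsub>?M\<^esub> sb \<in> carrier ?M" using mc sa sb by (simp add: monoid.m_closed)
  have "C \<otimes>\<^bsub>rees_quotient ?M ?I\<^esub> D = rees_cong ?M ?I `` {sa \<otimes>\<^bsub>?M\<^esub> sb}"
    by (simp add: rees_quotient_def sa_def sb_def)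
  then have "fm \<phi> (SOME x. x \<in> C \<otimes>\<^bsub>rees_quotient ?M ?I\<^esub> D) = fm \<phi> (sa \<otimes>\<^bsub>?M\<^esub> sb)"
    using rees_some[OF p] by simp
  also have "\<dots> = fm \<phi> sa \<otimes>\<^bsub>adj N\<^esub> fm \<phi> sb" using fh sa(1) sb(1) by (simp add: hom_def)
  finally show "fm \<phi> (SOME x. x \<in> C \<otimes>\<^bsub>rees_quotient ?M ?I\<^esub> D) =
      fm \<phi> (SOME x. x \<in> C) \<otimes>\<^bsub>adj N\<^esub> fm \<phi> (SOME x. x \<in> D)"
    by (simp add: sa_def sb_def)
qed

lemma rees_rf:
  fixes G :: "'g monoid" and X :: "'x set" and act :: "'x \<Rightarrow> 'g \<Rightarrow> 'x"
  assumes G: "group G" and rf: "residually_finite_group G" and A: "right_action G X act"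
  shows "residually_finite_monoid (rees_quotient (Mon G X act) (Xel ` X \<union> {Zero}))"
  unfolding residually_finite_monoid_def
proof (intro ballI impI)
  let ?M = "Mon G X act" and ?I = "Xel ` X \<union> {Zero}"
  let ?Q = "rees_quotient ?M ?I"
  fix C D assume C: "C \<in> carrier ?Q" and D: "D \<in> carrier ?Q" and CD: "C \<noteq> D"
  obtain a where a: "a \<in> carrier ?M" "C = rees_cong ?M ?I `` {a}"
    using C by (auto simp: rees_quotient_def quotient_def)
  obtain b where b: "b \<in> carrier ?M" "D = rees_cong ?M ?I `` {b}"
    using D by (auto simp: rees_quotient_def quotient_def)
  have ex: "\<exists>(N::nat monoid) \<phi>. group N \<and> finite (carrier N) \<and> \<phi> \<in> hom G N \<and> fm \<phi> a \<noteq> fm \<phi> b"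
  proof (cases "\<exists>g h. a = Gel g \<and> b = Gel h")
    case True
    then obtain g h where gh: "a = Gel g" "b = Gel h" by blast
    then have "g \<noteq> h" using CD a b by auto
    moreover have "g \<in> carrier G" "h \<in> carrier G" using a b gh by (auto simp: carrier_Mon)
    ultimately obtain N :: "nat monoid" and \<phi> where "group N \<and> finite (carrier N) \<and>
            \<phi> \<in> hom G N \<and> \<phi> g \<noteq> \<phi> h"
      using rf[unfolded residually_finite_group_def, rule_format] by blast
    then show ?thesis using gh by auto
  next
    case False
    have "a \<noteq> b" using CD a b by auto
    moreover have "\<not> (a \<in> ?I \<and> b \<in> ?I)" using CD a b rees_cls[OF a(1)] rees_cls[OF b(1)] by auto
    ultimately have "fm (\<lambda>_. 0) a \<noteq> fm (\<lambda>_. 0) b" using False a(1) b(1)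
      by (auto simp: carrier_Mon)
    then show ?thesis using triv_group triv_hom by fastforce
  qed
  then obtain N :: "nat monoid" and \<phi> where N: "group N" "finite (carrier N)" "\<phi> \<in> hom G N"
    and ne: "fm \<phi> a \<noteq> fm \<phi> b" by blast
  define \<psi> where "\<psi> = (\<lambda>C::('g,'x) melt set. fm \<phi> (SOME a. a \<in> C))"
  have "monoid (adj N)" by (rule adj_monoid[OF N(1)])
  moreover have "finite (carrier (adj N))" by (rule adj_finite[OF N(2)])
  moreover have "\<psi> \<in> hom ?Q (adj N)" unfolding \<psi>_def by (rule rees_hom[OF G N(1) N(3) A])
  moreover have "\<psi> \<one>\<^bsub>?Q\<^esub> = \<one>\<^bsub>adj N\<^esub>"
  proof -
    have "One \<in> carrier ?M" by (simp add: carrier_Mon)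
    then show ?thesis using rees_some[OF \<open>One \<in> carrier ?M\<close>, of \<phi>]
      by (simp add: \<psi>_def rees_quotient_def adj_def Mon_def)
  qed
  moreover have "\<psi> C \<noteq> \<psi> D" using ne rees_some[OF a(1), of \<phi>] rees_some[OF b(1), of \<phi>] a(2) b(2)
    by (simp add: \<psi>_def)
  ultimately show "\<exists>(N :: nat monoid) h. monoid N \<and> finite (carrier N) \<and>
            h \<in> hom ?Q N \<and> h \<one>\<^bsub>?Q\<^esub> = \<one>\<^bsub>N\<^esub> \<and> h C \<noteq> h D" by blast
qed

theorem mainTheorem12:
  fixes G :: "'g monoid" and X :: "'x set" and act :: "'x \<Rightarrow> 'g \<Rightarrow> 'x"
  assumes "group G"
    and "residually_finite_group G"
    and "primitive_action G X act"
    and "infinite X"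
  shows "monoid (Mon G X act)
    \<and> monoid_ideal (Mon G X act) (Xel ` X \<union> {Zero})
    \<and> residually_finite_semigroup (sub_semigroup (Mon G X act) (Xel ` X \<union> {Zero}))
    \<and> residually_finite_monoid (rees_quotient (Mon G X act) (Xel ` X \<union> {Zero}))
    \<and> \<not> residually_finite_monoid (Mon G X act)"
proof -
  have A: "right_action G X act" using assms(3) by (simp add: primitive_action_def)
  show ?thesis
    using Mon_monoid[OF assms(1) A] Mon_ideal[OF A] Mon_I_rf rees_rf[OF assms(1,2) A]
      Mon_not_rf[OF assms(1,3,4)] by blast
qed

end
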